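(* Let $\Omega\subset\mathbb{R}^n$ be open, $\omega$ a weight, $1\le p<q<\infty$, $a\in L^\infty(\Omega)$ non-negative, and $\varphi(x,t)=t^p+a(x)t^q$. Then $\varphi$ satisfies (A1)$_\omega$ if and only if there is a constant $C$ such that \[a(x)\le C\big(a(y)+\omega(B)^{\frac{q-p}{p}}\big)\] for every open ball $B$ and every $x,y\in B\cap\Omega$.
   Context: A weight is a nonnegative locally integrable function $\omega$ on $\mathbb{R}^n$, $\omega(E):=\int_E\omega\,dx$. (A1)$_\omega$: there is $\beta_1\in(0,1]$ such that $\varphi(x,\beta_1t)\le\varphi(y,t)$ for every open ball $B$ with $\omega(B)\le1$, a.e. $x,y\in B\cap\Omega$, and every $t\ge0$ with $\varphi(y,t)\in[1,1/\omega(B)]$. *)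

theory Defs
  imports "HOL-Analysis.Analysis"
begin

definition is_weight :: "('a::euclidean_space \<Rightarrow> real) \<Rightarrow> bool" where
  "is_weight w \<longleftrightarrow> (\<forall>x. 0 \<le> w x) \<and>
     (\<forall>K. compact K \<longrightarrow> set_integrable lebesgue K w)"

definition wmeas :: "('a::euclidean_space \<Rightarrow> real) \<Rightarrow> 'a set \<Rightarrow> real" where
  "wmeas w E = (LINT x:E|lebesgue. w x)"

text \<open>The bound \<open>\<phi>(y,t) \<le> 1/\<omega>(B)\<close> is written as
  \<open>\<phi>(y,t) \<omega>(B) \<le> 1\<close>, so that \<open>\<omega>(B) = 0\<close> corresponds to \<open>1/\<omega>(B) = \<infinity>\<close>.\<close>
definition A1_weight ::
  "('a::euclidean_space \<Rightarrow> real) \<Rightarrow> 'a set \<Rightarrow> ('a \<Rightarrow> real \<Rightarrow> real) \<Rightarrow> bool" where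
  "A1_weight w \<Omega> \<phi> \<longleftrightarrow>
     (\<exists>\<beta>1. 0 < \<beta>1 \<and> \<beta>1 \<le> 1 \<and>
       (\<forall>c r. wmeas w (ball c r) \<le> 1 \<longrightarrow>
          (AE x in lebesgue. AE y in lebesgue.
             x \<in> ball c r \<inter> \<Omega> \<longrightarrow> y \<in> ball c r \<inter> \<Omega> \<longrightarrow>
             (\<forall>t\<ge>0. 1 \<le> \<phi> y t \<and> \<phi> y t * wmeas w (ball c r) \<le> 1 \<longrightarrow>
                       \<phi> x (\<beta>1 * t) \<le> \<phi> y t))))"

definition double_phase :: "real \<Rightarrow> real \<Rightarrow> ('a \<Rightarrow> real) \<Rightarrow> 'a \<Rightarrow> real \<Rightarrow> real" where
  "double_phase p q a x t = t powr p + a x * t powr q"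

end

theory Submission
  imports Defs
begin

lemma dir1_point:
  fixes p q C ax ay om t :: real
  assumes p1: "1 \<le> p" and pq: "p < q" and C0: "0 \<le> C" and ay0: "0 \<le> ay" and ax0: "0 \<le> ax"
    and om0: "0 \<le> om" and hx: "ax \<le> C * (ay + om powr ((q - p) / p))"
    and t0: "0 \<le> t" and hom: "(t powr p + ay * t powr q) * om \<le> 1"
  shows "((1 / (2 * (C + 1))) * t) powr p + ax * ((1 / (2 * (C + 1))) * t) powr q
         \<le> t powr p + ay * t powr q"
proof -
  define e where "e = (q - p) / p"
  define b where "b = 1 / (2 * (C + 1))"
  have e0: "0 < e" using p1 pq by (simp add: e_def)
  have b0: "0 < b" and b1: "b \<le> 1/2" using C0 by (auto simp: b_def field_simps)
  have K: "om powr e * t powr q \<le> t powr p"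
  proof (cases "om = 0 \<or> t = 0")
    case True then show ?thesis using p1 pq by auto
  next
    case False
    then have om1: "0 < om" and tp: "0 < t" using om0 t0 by auto
    have "om * t powr p \<le> 1" using hom ay0 om0 t0
      by (smt (verit, ccfv_SIG) mult.commute mult_left_mono mult_nonneg_nonneg powr_ge_zero)
    then have "(om * t powr p) powr e \<le> 1" using e0 om1 tp
      by (simp add: powr_le1)
    moreover have "(om * t powr p) powr e = om powr e * t powr (q - p)"
      using p1 by (simp add: powr_mult powr_powr e_def)
    moreover have "t powr q = t powr (q - p) * t powr p"
      by (simp add: powr_add[symmetric])
    ultimately show ?thesis
      by (metis mult.assoc mult_left_le_one_le powr_ge_zero mult_nonneg_nonneg mult.commute)
  qed
  have bp: "b powr p \<le> b" using powr_le_one_le[OF b0 _ p1] b1 by simp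
  have bq: "b powr q \<le> b" using powr_le_one_le[OF b0 _, of q] b1 p1 pq by simp
  have "(b * t) powr p = b powr p * t powr p" using b0 t0 by (simp add: powr_mult)
  also have "\<dots> \<le> b * t powr p" using bp by (simp add: mult_right_mono)
  finally have A: "(b * t) powr p \<le> b * t powr p" .
  have "ax * (b * t) powr q = ax * (b powr q * t powr q)" using b0 t0 by (simp add: powr_mult)
  also have "\<dots> \<le> ax * (b * t powr q)" using bq ax0 by (simp add: mult_left_mono mult_right_mono)
  also have "\<dots> \<le> C * (ay + om powr e) * (b * t powr q)"
    using hx b0 by (simp add: e_def mult_right_mono)
  also have "\<dots> = C * b * (ay * t powr q) + C * b * (om powr e * t powr q)" by (simp add: algebra_simps)
  also have "\<dots> \<le> C * b * (ay * t powr q) + C * b * t powr p"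
    using K C0 b0 by (simp add: mult_left_mono)
  finally have B: "ax * (b * t) powr q \<le> C * b * (ay * t powr q) + C * b * t powr p" .
  have cb: "C * b \<le> 1/2" and cb2: "b + C * b \<le> 1/2" using C0 by (auto simp: b_def field_simps)
  have "(b * t) powr p + ax * (b * t) powr q \<le> (b + C * b) * t powr p + C * b * (ay * t powr q)"
    using A B by (simp add: algebra_simps)
  also have "\<dots> \<le> t powr p + ay * t powr q"
  proof -
    have "(b + C * b) * t powr p \<le> t powr p"
      using cb2 by (intro mult_left_le_one_le) (auto simp: b0 C0 less_imp_le)
    moreover have "C * b * (ay * t powr q) \<le> ay * t powr q"
      using cb by (intro mult_left_le_one_le) (auto simp: b0 C0 ay0 less_imp_le)
    ultimately show ?thesis by linarith
  qed
  finally show ?thesis by (simp add: b_def)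
qed

lemma exists_big_powr:
  fixes d K :: real assumes "0 < d"
  shows "\<exists>t\<ge>1. K \<le> t powr d"
proof -
  define t where "t = max 1 ((max K 1) powr (1/d))"
  have "t \<ge> 1" by (simp add: t_def)
  have "K \<le> max K 1" by simp
  also have "\<dots> = ((max K 1) powr (1/d)) powr d" using assms by (simp add: powr_powr)
  also have "\<dots> \<le> t powr d" using assms by (intro powr_mono2) (auto simp: t_def)
  finally show ?thesis using \<open>t \<ge> 1\<close> by blast
qed

lemma dir2_point:
  fixes p q b M ax ay om :: real
  assumes p1: "1 \<le> p" and pq: "p < q" and b0: "0 < b" and b1: "b \<le> 1" and M0: "0 \<le> M"
    and ax0: "0 \<le> ax" and axM: "ax \<le> M" and ay0: "0 \<le> ay" and om0: "0 \<le> om"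
    and H: "om \<le> 1 \<Longrightarrow> \<forall>t\<ge>0. 1 \<le> t powr p + ay * t powr q \<and> (t powr p + ay * t powr q) * om \<le> 1
        \<longrightarrow> (b * t) powr p + ax * (b * t) powr q \<le> t powr p + ay * t powr q"
  shows "ax \<le> 2 powr (q/p) * (M + 2 / b powr q) * (ay + om powr ((q-p)/p))"
proof -
  define e where "e = (q - p) / p"
  define C where "C = 2 powr (q/p) * (M + 2 / b powr q)"
  have e0: "0 < e" using p1 pq by (simp add: e_def)
  have bq0: "0 < b powr q" using b0 by simp
  have C0: "0 \<le> C" using M0 bq0 by (simp add: C_def)
  have two1: "1 \<le> 2 powr (q/p)" using p1 pq by (intro ge_one_powr_ge_zero) auto
  have H': "b powr q * ax * t powr q \<le> t powr p + ay * t powr q"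
    if "om \<le> 1" "0 \<le> t" "1 \<le> t powr p + ay * t powr q" "(t powr p + ay * t powr q) * om \<le> 1" for t
  proof -
    have "b powr q * ax * t powr q = ax * (b * t) powr q" using b0 that(2) by (simp add: powr_mult)
    also have "\<dots> \<le> (b * t) powr p + ax * (b * t) powr q" by simp
    also have "\<dots> \<le> t powr p + ay * t powr q" using H[OF that(1)] that by blast
    finally show ?thesis .
  qed
  have G1: "ax \<le> C * (ay + om powr e)" if "ax \<le> C * ay" using that C0 by (smt (verit) mult_left_mono powr_ge_zero)
  have G2: "ax \<le> C * (ay + om powr e)" if "ax \<le> C * om powr e" using that C0 ay0 by (smt (verit) mult_left_mono)
  have ay_case: "ax \<le> C * ay" if "ax \<le> 2 * ay / b powr q"
  proof -
    have "2 * ay / b powr q = 1 * (2 / b powr q * ay)" by simp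
    also have "\<dots> \<le> 2 powr (q/p) * ((M + 2 / b powr q) * ay)"
      using two1 M0 ay0 bq0 by (intro mult_mono) (auto intro!: mult_right_mono)
    finally show ?thesis using that by (simp add: C_def mult.assoc)
  qed
  have "ax \<le> C * (ay + om powr e)"
  proof (cases "om = 0")
    case True
    show ?thesis
    proof (cases "ay = 0")
      case True
      have "ax \<le> 0"
      proof (rule ccontr)
        assume "\<not> ax \<le> 0"
        then have axp: "0 < ax" by simp
        obtain t where t1: "t \<ge> 1" and tK: "2 / (b powr q * ax) \<le> t powr (q - p)"
          using exists_big_powr[of "q - p"] pq by auto
        have "b powr q * ax * t powr q \<le> t powr p + ay * t powr q"
          using t1 \<open>om = 0\<close> ge_one_powr_ge_zero[OF t1, of p] p1 by (intro H') (auto simp: \<open>ay = 0\<close>)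
        then have le: "b powr q * ax * t powr q \<le> t powr p" using \<open>ay = 0\<close> by simp
        have tq: "t powr q = t powr (q - p) * t powr p" by (simp add: powr_add[symmetric])
        have "2 * t powr p = (b powr q * ax) * (2 / (b powr q * ax)) * t powr p" using axp bq0 by simp
        also have "\<dots> \<le> (b powr q * ax) * t powr (q - p) * t powr p"
          using tK axp bq0 by (intro mult_right_mono mult_left_mono) auto
        also have "\<dots> = b powr q * ax * t powr q" by (simp add: tq mult.assoc)
        finally have "2 * t powr p \<le> t powr p" using le by linarith
        moreover have "0 < t powr p" using t1 by simp
        ultimately show False by linarith
      qed
      then show ?thesis using G1 \<open>ay = 0\<close> ax0 by simp
    next
      case False
      then have ayp: "0 < ay" using ay0 by simp
      obtain t where t1: "t \<ge> 1" and tK: "1 / ay \<le> t powr (q - p)"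
        using exists_big_powr[of "q - p"] pq by auto
      have tq: "t powr q = t powr (q - p) * t powr p" by (simp add: powr_add[symmetric])
      have "t powr p = ay * (1 / ay) * t powr p" using ayp by simp
      also have "\<dots> \<le> ay * t powr (q - p) * t powr p"
        using tK ayp by (intro mult_right_mono mult_left_mono) auto
      finally have tpq: "t powr p \<le> ay * t powr q" by (simp add: tq mult.assoc)
      have "b powr q * ax * t powr q \<le> t powr p + ay * t powr q"
        using t1 \<open>om = 0\<close> ayp ge_one_powr_ge_zero[OF t1, of p] p1
        by (intro H') (auto intro!: add_increasing2)
      also have "\<dots> \<le> 2 * ay * t powr q" using tpq by simp
      finally have "b powr q * ax * t powr q \<le> 2 * ay * t powr q" .
      moreover have "0 < t powr q" using t1 by simp
      ultimately have "b powr q * ax \<le> 2 * ay" by simp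
      then have "ax \<le> 2 * ay / b powr q" using bq0 by (simp add: field_simps)
      then show ?thesis using ay_case G1 by blast
    qed
  next
    case False
    then have omp: "0 < om" using om0 by simp
    show ?thesis
    proof (cases "om \<le> 1/2")
      case False
      have "1 \<le> (2 * om) powr e" using False e0 by (intro ge_one_powr_ge_zero) auto
      then have "ax \<le> M * (2 * om) powr e" using axM M0
        by (metis mult_left_mono mult.right_neutral order_trans)
      also have "\<dots> = (2 powr e * M) * om powr e" by (simp add: powr_mult)
      also have "\<dots> \<le> C * om powr e"
      proof (intro mult_right_mono)
        have "2 powr e \<le> 2 powr (q/p)" using p1 by (intro powr_mono) (auto simp: e_def divide_right_mono)
        then have "2 powr e * M \<le> 2 powr (q/p) * M" using M0 by (simp add: mult_right_mono)
        also have "\<dots> \<le> C" unfolding C_def using bq0 by (intro mult_left_mono) auto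
        finally show "2 powr e * M \<le> C" .
      qed auto
      finally show ?thesis using G2 by blast
    next
      case True
      define t0 where "t0 = (2 * om) powr (- 1 / p)"
      have t0p: "0 < t0" using omp by (simp add: t0_def)
      have t0pp: "t0 powr p = 1 / (2 * om)"
      proof -
        have "t0 powr p = (2 * om) powr ((- 1 / p) * p)" by (simp add: t0_def powr_powr)
        also have "(- 1 / p) * p = - 1" using p1 by simp
        finally show ?thesis using omp by (simp add: powr_minus_divide)
      qed
      have t0pq: "t0 powr q = (2 * om) powr (- (q / p))" using omp p1
        by (simp add: t0_def powr_powr)
      have big: "1 \<le> 1 / (2 * om)" using True omp by (simp add: field_simps)
      show ?thesis
      proof (cases "ay * t0 powr q \<le> 1 / (2 * om)")
        case True
        have half: "1 / (2 * om) + 1 / (2 * om) = 1 / om" by simp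
        have phi_le: "t0 powr p + ay * t0 powr q \<le> 1 / om" using True t0pp half by linarith
        have "b powr q * ax * t0 powr q \<le> t0 powr p + ay * t0 powr q"
        proof (rule H')
          have "(t0 powr p + ay * t0 powr q) * om \<le> (1 / om) * om"
            using phi_le omp by (intro mult_right_mono) auto
          then show "(t0 powr p + ay * t0 powr q) * om \<le> 1" using omp by simp
          have "0 \<le> ay * t0 powr q" using ay0 by simp
          then show "1 \<le> t0 powr p + ay * t0 powr q" using big t0pp by linarith
        qed (use \<open>om \<le> 1/2\<close> t0p in auto)
        also have "\<dots> \<le> 1 / om" by (rule phi_le)
        finally have "b powr q * ax * t0 powr q \<le> 1 / om" .
        then have "ax * (om * b powr q * t0 powr q) \<le> 1" using omp
          by (simp add: pos_le_divide_eq mult.commute mult.left_commute)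
        then have "ax \<le> 1 / (om * b powr q * t0 powr q)" using bq0 t0p omp
          by (simp add: pos_le_divide_eq)
        also have "1 / (om * b powr q * t0 powr q) = 2 powr (q/p) / b powr q * om powr e"
        proof -
          have "1 / t0 powr q = (2 * om) powr (q / p)" by (simp add: t0pq powr_minus_divide)
          also have "\<dots> = 2 powr (q/p) * (om powr e * om)"
          proof -
            have "om powr (q / p) = om powr (e + 1)" using p1 by (simp add: e_def diff_divide_distrib)
            also have "\<dots> = om powr e * om" using omp by (simp add: powr_add)
            finally show ?thesis using omp by (simp add: powr_mult)
          qed
          finally have "1 / t0 powr q = 2 powr (q/p) * (om powr e * om)" .
          then show ?thesis using omp bq0 t0p by (simp add: field_simps)
        qed
        also have "\<dots> \<le> C * om powr e"
        proof (intro mult_right_mono)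
          show "2 powr (q/p) / b powr q \<le> C" unfolding C_def using M0 bq0
            by (simp add: field_simps mult_left_mono)
        qed auto
        finally show ?thesis using G2 by blast
      next
        case False
        then have ayp: "0 < ay" using t0p omp ay0 by (cases "ay = 0") auto
        define t1 where "t1 = (1 / (2 * om * ay)) powr (1 / q)"
        have t1p: "0 < t1" using omp ayp by (simp add: t1_def)
        have t1q: "t1 powr q = 1 / (2 * om * ay)" using omp ayp p1 pq
          by (simp add: t1_def powr_powr)
        have ayt1: "ay * t1 powr q = 1 / (2 * om)" using t1q ayp by simp
        have "ay * t1 powr q < ay * t0 powr q" using False ayt1 by simp
        then have "t1 powr q < t0 powr q" using ayp by simp
        then have "t1 < t0"
        proof (rule contrapos_pp)
          assume "\<not> t1 < t0"
          then have "t0 powr q \<le> t1 powr q" using t0p p1 pq by (intro powr_mono2) auto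
          then show "\<not> t1 powr q < t0 powr q" by linarith
        qed
        then have "t1 powr p \<le> t0 powr p" using t1p p1 by (intro powr_mono2) auto
        then have t1pp: "t1 powr p \<le> 1 / (2 * om)" using t0pp by simp
        have half: "1 / (2 * om) + 1 / (2 * om) = 1 / om" by simp
        have phi_le: "t1 powr p + ay * t1 powr q \<le> 1 / om" using t1pp ayt1 half by linarith
        have "b powr q * ax * t1 powr q \<le> t1 powr p + ay * t1 powr q"
        proof (rule H')
          have "(t1 powr p + ay * t1 powr q) * om \<le> (1 / om) * om"
            using phi_le omp by (intro mult_right_mono) auto
          then show "(t1 powr p + ay * t1 powr q) * om \<le> 1" using omp by simp
          have "0 \<le> t1 powr p" by simp
          then show "1 \<le> t1 powr p + ay * t1 powr q" using big ayt1 by linarith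
        qed (use \<open>om \<le> 1/2\<close> t1p in auto)
        also have "\<dots> \<le> 2 * ay * t1 powr q" using t1pp ayt1 by simp
        finally have "b powr q * ax * t1 powr q \<le> 2 * ay * t1 powr q" .
        moreover have "0 < t1 powr q" using t1p by simp
        ultimately have "b powr q * ax \<le> 2 * ay" by simp
        then have "ax \<le> 2 * ay / b powr q" using bq0 by (simp add: field_simps)
        then show ?thesis using ay_case G1 by blast
      qed
    qed
  qed
  then show ?thesis by (simp add: C_def e_def)
qed

lemma wmeas_nonneg: "(\<And>x. 0 \<le> w x) \<Longrightarrow> 0 \<le> wmeas w E"
  unfolding wmeas_def set_lebesgue_integral_def
  by (intro integral_nonneg_AE) (auto simp: indicator_def)

theorem lemma5p9:
  fixes \<Omega> :: "'a::euclidean_space set" and w a :: "'a \<Rightarrow> real" and p q :: real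
  assumes "open \<Omega>"
    and "is_weight w"
    and "1 \<le> p" and "p < q"
    and "set_borel_measurable lebesgue \<Omega> a"
    and "\<exists>M. AE x in lebesgue. x \<in> \<Omega> \<longrightarrow> \<bar>a x\<bar> \<le> M"
    and "AE x in lebesgue. x \<in> \<Omega> \<longrightarrow> 0 \<le> a x"
  shows "A1_weight w \<Omega> (double_phase p q a) \<longleftrightarrow>
    (\<exists>C. \<forall>c r. AE x in lebesgue. AE y in lebesgue.
        x \<in> ball c r \<inter> \<Omega> \<longrightarrow> y \<in> ball c r \<inter> \<Omega> \<longrightarrow>
        a x \<le> C * (a y + wmeas w (ball c r) powr ((q - p) / p)))"
proof
  have w0: "\<And>x. 0 \<le> w x" using assms(2) by (simp add: is_weight_def)
  note nn = assms(7)
  assume "A1_weight w \<Omega> (double_phase p q a)"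
  then obtain b where b0: "0 < b" and b1: "b \<le> 1" and HA: "\<And>c r. wmeas w (ball c r) \<le> 1 \<Longrightarrow>
          (AE x in lebesgue. AE y in lebesgue.
             x \<in> ball c r \<inter> \<Omega> \<longrightarrow> y \<in> ball c r \<inter> \<Omega> \<longrightarrow>
             (\<forall>t\<ge>0. 1 \<le> double_phase p q a y t \<and> double_phase p q a y t * wmeas w (ball c r) \<le> 1 \<longrightarrow>
                       double_phase p q a x (b * t) \<le> double_phase p q a y t))"
    unfolding A1_weight_def by blast
  obtain M0 where M0: "AE x in lebesgue. x \<in> \<Omega> \<longrightarrow> \<bar>a x\<bar> \<le> M0" using assms(6) by blast
  define M where "M = max M0 0"
  have Mnn: "0 \<le> M" by (simp add: M_def)
  have MA: "AE x in lebesgue. x \<in> \<Omega> \<longrightarrow> a x \<le> M" using M0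
    by eventually_elim (auto simp: M_def)
  show "\<exists>C. \<forall>c r. AE x in lebesgue. AE y in lebesgue.
        x \<in> ball c r \<inter> \<Omega> \<longrightarrow> y \<in> ball c r \<inter> \<Omega> \<longrightarrow>
        a x \<le> C * (a y + wmeas w (ball c r) powr ((q - p) / p))"
  proof (intro exI allI)
    fix c r
    define om where "om = wmeas w (ball c r)"
    have om0: "0 \<le> om" unfolding om_def by (rule wmeas_nonneg[OF w0])
    have H: "AE x in lebesgue. AE y in lebesgue. om \<le> 1 \<longrightarrow>
             x \<in> ball c r \<inter> \<Omega> \<longrightarrow> y \<in> ball c r \<inter> \<Omega> \<longrightarrow>
             (\<forall>t\<ge>0. 1 \<le> double_phase p q a y t \<and> double_phase p q a y t * om \<le> 1 \<longrightarrow>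
                       double_phase p q a x (b * t) \<le> double_phase p q a y t)"
    proof (cases "om \<le> 1")
      case True
      show ?thesis using HA[of c r] True unfolding om_def by simp
    next
      case False
      then show ?thesis by simp
    qed
    show "AE x in lebesgue. AE y in lebesgue.
        x \<in> ball c r \<inter> \<Omega> \<longrightarrow> y \<in> ball c r \<inter> \<Omega> \<longrightarrow>
        a x \<le> 2 powr (q/p) * (M + 2 / b powr q) * (a y + wmeas w (ball c r) powr ((q - p) / p))"
      using H nn MA
    proof eventually_elim
      case (elim x)
      show ?case using elim(1) nn
      proof eventually_elim
        case (elim y)
        show ?case
        proof (intro impI)
          assume xin: "x \<in> ball c r \<inter> \<Omega>" and yin: "y \<in> ball c r \<inter> \<Omega>"
          show "a x \<le> 2 powr (q/p) * (M + 2 / b powr q) * (a y + wmeas w (ball c r) powr ((q - p) / p))"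
            unfolding om_def[symmetric]
          proof (rule dir2_point[OF assms(3,4) b0 b1 Mnn])
            show "0 \<le> a x" "a x \<le> M" using \<open>x \<in> \<Omega> \<longrightarrow> 0 \<le> a x\<close> \<open>x \<in> \<Omega> \<longrightarrow> a x \<le> M\<close> xin by auto
            show "0 \<le> a y" using elim(2) yin by auto
            show "0 \<le> om" by (rule om0)
            show "\<forall>t\<ge>0. 1 \<le> t powr p + a y * t powr q \<and> (t powr p + a y * t powr q) * om \<le> 1 \<longrightarrow>
              (b * t) powr p + a x * (b * t) powr q \<le> t powr p + a y * t powr q" if "om \<le> 1"
              using elim(1) that xin yin unfolding double_phase_def by blast
          qed
        qed
      qed
    qed
  qed
next
  have w0: "\<And>x. 0 \<le> w x" using assms(2) by (simp add: is_weight_def)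
  note nn = assms(7)
  assume "\<exists>C. \<forall>c r. AE x in lebesgue. AE y in lebesgue.
        x \<in> ball c r \<inter> \<Omega> \<longrightarrow> y \<in> ball c r \<inter> \<Omega> \<longrightarrow>
        a x \<le> C * (a y + wmeas w (ball c r) powr ((q - p) / p))"
  then obtain C0 where HC: "\<And>c r. AE x in lebesgue. AE y in lebesgue.
        x \<in> ball c r \<inter> \<Omega> \<longrightarrow> y \<in> ball c r \<inter> \<Omega> \<longrightarrow>
        a x \<le> C0 * (a y + wmeas w (ball c r) powr ((q - p) / p))" by blast
  define C where "C = max C0 0"
  have Cnn: "0 \<le> C" by (simp add: C_def)
  show "A1_weight w \<Omega> (double_phase p q a)"
    unfolding A1_weight_def
  proof (intro exI[of _ "1 / (2 * (C + 1))"] conjI allI impI)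
    show "0 < 1 / (2 * (C + 1))" using Cnn by simp
    show "1 / (2 * (C + 1)) \<le> 1" using Cnn by (simp add: field_simps)
    fix c r
    assume "wmeas w (ball c r) \<le> 1"
    define om where "om = wmeas w (ball c r)"
    have om0: "0 \<le> om" unfolding om_def by (rule wmeas_nonneg[OF w0])
    show "AE x in lebesgue. AE y in lebesgue.
             x \<in> ball c r \<inter> \<Omega> \<longrightarrow> y \<in> ball c r \<inter> \<Omega> \<longrightarrow>
             (\<forall>t\<ge>0. 1 \<le> double_phase p q a y t \<and> double_phase p q a y t * wmeas w (ball c r) \<le> 1 \<longrightarrow>
                       double_phase p q a x (1 / (2 * (C + 1)) * t) \<le> double_phase p q a y t)"
      using HC[of c r] nn
    proof eventually_elim
      case (elim x)
      show ?case using elim(1) nn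
      proof eventually_elim
        case (elim y)
        show ?case
        proof (intro impI allI)
          fix t :: real
          assume xin: "x \<in> ball c r \<inter> \<Omega>" and yin: "y \<in> ball c r \<inter> \<Omega>"
            and t0: "0 \<le> t"
            and tc: "1 \<le> double_phase p q a y t \<and> double_phase p q a y t * wmeas w (ball c r) \<le> 1"
          have ax0: "0 \<le> a x" using \<open>x \<in> \<Omega> \<longrightarrow> 0 \<le> a x\<close> xin by auto
          have ay0: "0 \<le> a y" using elim(2) yin by auto
          have hx0: "a x \<le> C0 * (a y + om powr ((q - p) / p))" using elim(1) xin yin by (simp add: om_def)
          have "C0 * (a y + om powr ((q - p) / p)) \<le> C * (a y + om powr ((q - p) / p))"
            using ay0 by (intro mult_right_mono) (auto simp: C_def)
          with hx0 have hx: "a x \<le> C * (a y + om powr ((q - p) / p))" by linarith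
          show "double_phase p q a x (1 / (2 * (C + 1)) * t) \<le> double_phase p q a y t"
            unfolding double_phase_def
            using dir1_point[OF assms(3,4) Cnn ay0 ax0 om0 hx t0] tc
            unfolding double_phase_def om_def by blast
        qed
      qed
    qed
  qed
qed
end
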